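(* Let $\mathbf{FdHilb}_{\mathrm{Un}}$ be the category of finite-dimensional Hilbert spaces with unitary maps, $\mathbf{Conv}$ the category of convex sets with affine maps, and $\mathbf{EMod}$ the category of effect modules over $[0,1]$. For $H$ in $\mathbf{FdHilb}_{\mathrm{Un}}$ let $\mathcal{DM}(H)=\{A \ge 0 : \mathrm{tr}(A)=1\}$ be the convex set of density operators and $\mathcal{E}f(H)=\{A : 0\le A\le I\}$ (Löwner order) the effect module of effects. There is a dual adjunction $\mathbf{Conv}(-,[0,1]) \colon \mathbf{Conv}\rightleftarrows \mathbf{EMod}^{\mathrm{op}} \colon \mathbf{EMod}(-,[0,1])$, and there are natural isomorphisms $$\mathrm{hs}_{\mathcal{E}f}\colon \mathcal{E}f(H)\xrightarrow{\ \cong\ } \mathbf{Conv}\big(\mathcal{DM}(H),[0,1]\big),\ A\mapsto \mathrm{tr}(A\,-),\qquad \mathrm{hs}_{\mathcal{DM}}\colon \mathcal{DM}(H)\xrightarrow{\ \cong\ } \mathbf{EMod}\big(\mathcal{E}f(H),[0,1]\big),\ B\mapsto \mathrm{tr}(B\,-),$$ in $\mathbf{EMod}$ and $\mathbf{Conv}$ respectively, which give rise to a map of adjunctions from the self-adjunction $(-)^\dagger \dashv (-)^\dagger$ between $\mathbf{FdHilb}_{\mathrm{Un}}$ and $\mathbf{FdHilb}_{\mathrm{Un}}^{\mathrm{op}}$ to the adjunction $\mathbf{Conv}\rightleftarrows\mathbf{EMod}^{\mathrm{op}}$, with vertical functors $\mathcal{DM}\colon \mathbf{FdHilb}_{\mathrm{Un}}\to\mathbf{Conv}$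 (states) and $\mathcal{E}f\colon \mathbf{FdHilb}_{\mathrm{Un}}^{\mathrm{op}}\to\mathbf{EMod}^{\mathrm{op}}$ (statements/effects).
   Context: An effect algebra is a partial commutative monoid $(E,0,\oplus)$, where $\oplus$ is a partial, commutative, associative binary operation with unit $0$ (write $x\perp y$ when $x\oplus y$ is defined), with an orthosupplement $(-)^\perp$ such that $x^\perp$ is the unique element with $x\oplus x^\perp = 1 := 0^\perp$ and $x\perp 1\Rightarrow x=0$. An effect module over $[0,1]$ is an effect algebra with a scalar multiplication by $[0,1]$ that preserves $\oplus$ in each variable and is a monoid action; morphisms preserve $1$, defined sums and scalars. $\mathcal{E}f(H)$ is an effect module with $A\perp B$ iff $A+B\le I$, $A\oplus B = A+B$, $A^\perp = I-A$, and usual scalar multiplication. Convex sets are Eilenberg-Moore algebras of the finitary distribution monad; $\mathcal{DM}(H)$ is convex under ordinary convex combinations of operators. On a unitary $U\colon H\to K$, both functors act by $A\mapsto UAU^\dagger$. The adjunction $\mathbf{Conv}\rightleftarrows\mathbf{EMod}^{\mathrm{op}}$ is given by homming into $[0,1]$: $\mathbf{Conv}(X,[0,1])$ is an effect module with pointwise partial sum (defined when the pointwise sum stays $\le 1$) and pointwise scalar multiplication, $\mathbf{EMod}(Y,[0,1])$ is a convex set with pointwise convex combinations, and the correspondence is by swapping arguments. $\mathrm{tr}$ is the trace of an operator. *)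

theory Defs
  imports "HOL-Analysis.Analysis"
begin

text \<open>A finite-dimensional Hilbert space of dimension CARD('n) is modelled as complex^'n;
  operators on it are matrices complex^'n^'n; a unitary H -> K is a matrix complex^'n^'m.\<close>

definition cadj :: "complex^'n^'m \<Rightarrow> complex^'m^'n" where
  "cadj A = (\<chi> i j. cnj (A $ j $ i))"

definition unitary_map :: "complex^'n^'m \<Rightarrow> bool" where
  "unitary_map U \<longleftrightarrow> cadj U ** U = mat 1 \<and> U ** cadj U = mat 1"

definition psd :: "complex^'n^'n \<Rightarrow> bool" where
  "psd A \<longleftrightarrow> (\<forall>v::complex^'n.
      let q = (\<Sum>i\<in>UNIV. cnj (v $ i) * ((A *v v) $ i)) in Im q = 0 \<and> Re q \<ge> 0)"

definition loewner_le :: "complex^'n^'n \<Rightarrow> complex^'n^'n \<Rightarrow> bool" where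
  "loewner_le A B \<longleftrightarrow> psd (B - A)"

definition DM :: "(complex^'n^'n) set" where
  "DM = {B. psd B \<and> trace B = 1}"

definition Ef :: "(complex^'n^'n) set" where
  "Ef = {A. loewner_le 0 A \<and> loewner_le A (mat 1)}"

definition ConvHom01 :: "(complex^'n^'n) set \<Rightarrow> (complex^'n^'n \<Rightarrow> real) set" where
  "ConvHom01 X = {f \<in> extensional X. (\<forall>x\<in>X. 0 \<le> f x \<and> f x \<le> 1) \<and>
     (\<forall>x\<in>X. \<forall>y\<in>X. \<forall>r::real. 0 \<le> r \<and> r \<le> 1 \<longrightarrow>
        f (r *\<^sub>R x + (1 - r) *\<^sub>R y) = r * f x + (1 - r) * f y)}"

text \<open>EMod(Ef(H),[0,1]): maps preserving 1, defined sums (A perp B iff A+B <= I) and scalars.\<close>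
definition EModHom01 :: "(complex^'n^'n \<Rightarrow> real) set" where
  "EModHom01 = {g \<in> extensional (Ef :: (complex^'n^'n) set).
     (\<forall>A\<in>Ef. 0 \<le> g A \<and> g A \<le> 1) \<and> g (mat 1) = 1 \<and>
     (\<forall>A\<in>Ef. \<forall>B\<in>Ef. loewner_le (A + B) (mat 1) \<longrightarrow> g (A + B) = g A + g B) \<and>
     (\<forall>r::real. \<forall>A\<in>Ef. 0 \<le> r \<and> r \<le> 1 \<longrightarrow> g (r *\<^sub>R A) = r * g A)}"

text \<open>The maps of the theorem (tr(AB) is real for positive A,B; we take its real part).\<close>
definition hs_Ef :: "complex^'n^'n \<Rightarrow> (complex^'n^'n \<Rightarrow> real)" where
  "hs_Ef A = restrict (\<lambda>B. Re (trace (A ** B))) DM"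

definition hs_DM :: "complex^'n^'n \<Rightarrow> (complex^'n^'n \<Rightarrow> real)" where
  "hs_DM B = restrict (\<lambda>A. Re (trace (B ** A))) Ef"

end

theory Submission
  imports Defs
begin

definition sf :: "complex^'n^'n \<Rightarrow> complex^'n \<Rightarrow> complex^'n \<Rightarrow> complex" where
  "sf A x y = (\<Sum>i\<in>UNIV. \<Sum>j\<in>UNIV. cnj (x$i) * A$i$j * y$j)"

abbreviation qf where "qf A x \<equiv> sf A x x"

definition herm :: "complex^'n^'n \<Rightarrow> bool" where
  "herm A \<longleftrightarrow> (\<forall>i j. A$j$i = cnj (A$i$j))"

definition proj :: "complex^'n \<Rightarrow> complex^'n^'n" where
  "proj v = (\<chi> p q. v$p * cnj (v$q))"

definition nv :: "complex^'n \<Rightarrow> real" where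
  "nv v = (\<Sum>i\<in>UNIV. (cmod (v$i))^2)"

lemma psd_iff: "psd A \<longleftrightarrow> (\<forall>v. Im (qf A v) = 0 \<and> Re (qf A v) \<ge> 0)"
  unfolding psd_def sf_def Let_def matrix_vector_mult_def
  by (simp add: sum_distrib_left mult.assoc)

lemma sf_add1: "sf A (x + y) z = sf A x z + sf A y z"
  by (simp add: sf_def distrib_right sum.distrib)
lemma sf_add2: "sf A x (y + z) = sf A x y + sf A x z"
  by (simp add: sf_def distrib_left sum.distrib)
lemma sf_axis1: "sf A (axis i a) y = cnj a * (\<Sum>j\<in>UNIV. A$i$j * y$j)"
proof -
  have "(\<lambda>i'. \<Sum>j\<in>UNIV. cnj ((axis i a)$i') * A$i'$j * y$j) = (\<lambda>i'. if i' = i then cnj a * (\<Sum>j\<in>UNIV. A$i$j * y$j) else 0)"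
    by (auto simp: axis_def sum_distrib_left mult.assoc)
  then show ?thesis unfolding sf_def by (simp only:) simp
qed
lemma sf_axis2: "sf A x (axis j b) = (\<Sum>i\<in>UNIV. cnj (x$i) * A$i$j) * b"
proof -
  have "sf A x (axis j b) = (\<Sum>i\<in>UNIV. cnj (x$i) * A$i$j * b)"
    unfolding sf_def by (rule sum.cong) (auto simp: axis_def if_distrib cong: if_cong)
  then show ?thesis by (simp add: sum_distrib_right)
qed
lemma sf_axis: "sf A (axis i a) (axis j b) = cnj a * A$i$j * b"
proof -
  have "(\<lambda>j'. A$i$j' * (axis j b)$j') = (\<lambda>j'. if j' = j then A$i$j * b else 0)"
    by (auto simp: axis_def)
  then show ?thesis unfolding sf_axis1 by (simp only:) simp
qed

lemma sf_diff_mat: "sf (A - B) x y = sf A x y - sf B x y"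
  by (simp add: sf_def algebra_simps sum_subtractf)
lemma sf_add_mat: "sf (A + B) x y = sf A x y + sf B x y"
  by (simp add: sf_def algebra_simps sum.distrib)
lemma scaleR_mat_entry: "(c *\<^sub>R (A::complex^'n^'m))$i$j = of_real c * A$i$j"
  by (simp only: vector_scaleR_component) (simp add: scaleR_conv_of_real)
lemma sf_scale_mat: "sf (c *\<^sub>R A) x y = of_real c * sf A x y"
  unfolding sf_def scaleR_mat_entry by (simp add: sum_distrib_left mult.assoc mult.left_commute)

lemma psd_herm: assumes "psd A" shows "herm A"
  unfolding herm_def
proof (intro allI)
  fix i j
  have q: "\<And>v. Im (qf A v) = 0" using assms psd_iff by blast
  have 1: "Im (A$i$i) = 0" "Im (A$j$j) = 0" using q[of "axis i 1"] q[of "axis j 1"] by (simp_all add: sf_axis)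
  have 2: "Im (A$i$j + A$j$i) = 0" using q[of "axis i 1 + axis j 1"] 1
    by (simp add: sf_add1 sf_add2 sf_axis)
  have 3: "Re (A$i$j) - Re (A$j$i) = 0" using q[of "axis i 1 + axis j \<i>"] 1
    by (simp add: sf_add1 sf_add2 sf_axis)
  show "A$j$i = cnj (A$i$j)" using 2 3 by (simp add: complex_eq_iff)
qed

lemma hermD: "herm A \<Longrightarrow> cnj (A$i$j) = A$j$i"
  unfolding herm_def by (metis complex_cnj_cnj)

lemma herm_qf_real: assumes "herm A" shows "Im (qf A v) = 0"
proof -
  have "cnj (qf A v) = (\<Sum>i\<in>UNIV. \<Sum>j\<in>UNIV. v$i * A$j$i * cnj (v$j))"
    using assms by (simp add: sf_def hermD)
  also have "\<dots> = qf A v" unfolding sf_def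
    by (subst sum.swap) (simp add: mult.commute mult.left_commute)
  finally show ?thesis by (metis Reals_cnj_iff complex_is_Real_iff)
qed

lemma trace_mult: "trace (A ** B) = (\<Sum>i\<in>UNIV. \<Sum>j\<in>UNIV. A$i$j * B$j$i)"
  by (simp add: trace_def matrix_matrix_mult_def)

lemma trace_proj: "trace (A ** proj v) = qf A v"
  unfolding trace_mult proj_def sf_def
  by (simp add: mult.commute mult.left_commute)

lemma trace_proj1: "trace (proj v) = of_real (nv v)"
  unfolding trace_def proj_def nv_def of_real_sum by (simp del: of_real_power add: complex_norm_square)

lemma qf_proj: "qf (proj v) x = of_real ((cmod (\<Sum>i\<in>UNIV. cnj (x$i) * v$i))^2)"
proof -
  have "qf (proj v) x = (\<Sum>i\<in>UNIV. cnj (x$i) * v$i) * cnj (\<Sum>i\<in>UNIV. cnj (x$i) * v$i)"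
    unfolding sf_def proj_def by (simp add: sum_product mult.commute mult.left_commute)
  then show ?thesis by (simp only: complex_norm_square)
qed

lemma psd_proj: "psd (proj v)"
  unfolding psd_iff qf_proj by simp

lemma qf_id: "qf (mat 1) (x::complex^'n) = of_real (nv x)"
proof -
  have "\<And>i. (\<Sum>j\<in>UNIV. cnj (x$i) * (mat 1::complex^'n^'n)$i$j * x$j) = cnj (x$i) * x$i"
  proof -
    fix i
    have "(\<lambda>j. cnj (x$i) * (mat 1::complex^'n^'n)$i$j * x$j) = (\<lambda>j. if j = i then cnj (x$i) * x$i else 0)"
      by (auto simp: mat_def)
    then show "(\<Sum>j\<in>UNIV. cnj (x$i) * (mat 1::complex^'n^'n)$i$j * x$j) = cnj (x$i) * x$i" by (simp only:) simp
  qed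
  then have "qf (mat 1) x = (\<Sum>i\<in>UNIV. cnj (x$i) * x$i)" unfolding sf_def by (simp only:)
  also have "\<dots> = (\<Sum>i\<in>UNIV. of_real ((cmod (x$i))^2))"
    by (rule sum.cong) (simp_all only: complex_norm_square mult.commute)
  finally show ?thesis unfolding nv_def of_real_sum .
qed

lemma CS: "(cmod (\<Sum>i\<in>UNIV. cnj (x$i) * v$i))^2 \<le> nv x * nv v"
proof -
  have "cmod (\<Sum>i\<in>UNIV. cnj (x$i) * v$i) \<le> (\<Sum>i\<in>UNIV. cmod (x$i) * cmod (v$i))"
    by (rule order_trans[OF norm_sum]) (simp add: norm_mult)
  then have "(cmod (\<Sum>i\<in>UNIV. cnj (x$i) * v$i))^2 \<le> (\<Sum>i\<in>UNIV. cmod (x$i) * cmod (v$i))^2"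
    by (rule power_mono[OF _ norm_ge_zero])
  also have "\<dots> \<le> nv x * nv v" unfolding nv_def using Cauchy_Schwarz_ineq_sum[of "\<lambda>i. cmod (x$i)" "\<lambda>i. cmod (v$i)" UNIV] .
  finally show ?thesis .
qed

lemma psd_add: "psd A \<Longrightarrow> psd B \<Longrightarrow> psd (A + B)"
  unfolding psd_iff sf_add_mat by simp
lemma psd_scale: "0 \<le> c \<Longrightarrow> psd A \<Longrightarrow> psd (c *\<^sub>R A)"
  unfolding psd_iff sf_scale_mat by simp
lemma psd_zero: "psd 0"
  unfolding psd_iff sf_def by simp
lemma psd_sum: "finite S \<Longrightarrow> (\<And>k. k \<in> S \<Longrightarrow> psd (F k)) \<Longrightarrow> psd (\<Sum>k\<in>S. F k)"
  by (induction S rule: finite_induct) (auto intro: psd_add psd_zero)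

lemma psd_diag: assumes "psd A" shows "Im (A$i$i) = 0" "Re (A$i$i) \<ge> 0"
  using assms[unfolded psd_iff, rule_format, of "axis i 1"] by (simp_all add: sf_axis)

lemma qf_add: "qf A (x + y) = qf A x + sf A x y + sf A y x + qf A y"
  by (simp add: sf_add1 sf_add2)

lemma Re_cnj_mult: "Re (cnj a * a) = (cmod a)^2"
  using cmod_power2[of a] by (simp add: power2_eq_square)

lemma psd_diag_zero: assumes "psd A" "A$i$i = 0" shows "A$i$j = 0"
proof (rule ccontr)
  assume a0: "A$i$j \<noteq> 0"
  define a where "a = A$i$j"
  have h: "A$j$i = cnj a" using hermD[OF psd_herm[OF assms(1)], of i j] unfolding a_def by simp
  define l where "l = (Re (A$j$j) + 1) / (2 * (cmod a)^2)"
  have "cmod a > 0" using a0 a_def by simp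
  then have l2: "2 * l * (cmod a)^2 = Re (A$j$j) + 1" unfolding l_def by simp
  define t where "t = - (of_real l) * a"
  have "qf A (axis j 1 + axis i t) = A$j$j + cnj a * t + cnj t * a"
    unfolding sf_add1 sf_add2 sf_axis using assms(2) h a_def by simp
  moreover have "cnj a * t = - of_real l * (cnj a * a)" "cnj t * a = - of_real l * (cnj a * a)"
    unfolding t_def by (simp_all add: algebra_simps)
  then have "Re (cnj a * t) = - l * (cmod a)^2" "Re (cnj t * a) = - l * (cmod a)^2"
    using Re_cnj_mult[of a] by simp_all
  ultimately have "Re (qf A (axis j 1 + axis i t)) = - 1" using l2 by simp
  moreover have "Re (qf A (axis j 1 + axis i t)) \<ge> 0" using assms(1)[unfolded psd_iff] by blast
  ultimately show False by simp
qed

lemma schur: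
  fixes A :: "complex^'n^'n"
  assumes "psd A" "A$i$i \<noteq> 0"
  shows "psd (A - (\<chi> p q. A$p$i * A$i$q / A$i$i))"
proof -
  let ?R = "(\<chi> p q. A$p$i * A$i$q / A$i$i)::complex^'n^'n"
  have h: "herm A" using psd_herm[OF assms(1)] .
  have ar: "cnj (A$i$i) = A$i$i" using hermD[OF h, of i i] by simp
  show ?thesis unfolding psd_iff
  proof
    fix v :: "complex^'n"
    define s where "s = (\<Sum>q\<in>UNIV. A$i$q * v$q)"
    define t where "t = - s / A$i$i"
    have cs: "(\<Sum>p\<in>UNIV. cnj (v$p) * A$p$i) = cnj s"
      unfolding s_def using hermD[OF h] by (simp add: mult.commute)
    have "sf ?R v v = (\<Sum>p\<in>UNIV. \<Sum>q\<in>UNIV. (cnj (v$p) * A$p$i) * (A$i$q * v$q) / A$i$i)"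
      unfolding sf_def by (intro sum.cong refl) simp
    also have "\<dots> = (\<Sum>p\<in>UNIV. cnj (v$p) * A$p$i) * (\<Sum>q\<in>UNIV. A$i$q * v$q) / A$i$i"
      by (simp only: sum_product sum_divide_distrib)
    finally have "sf ?R v v = (\<Sum>p\<in>UNIV. cnj (v$p) * A$p$i) * (\<Sum>q\<in>UNIV. A$i$q * v$q) / A$i$i" .
    then have 1: "sf ?R v v = cnj s * s / A$i$i" using cs s_def by simp
    have "qf A (v + axis i t) = qf A v + cnj s * t + cnj t * s + cnj t * A$i$i * t"
      unfolding qf_add unfolding sf_axis unfolding sf_axis2 sf_axis1 cs s_def by simp
    also have "\<dots> = qf A v - cnj s * s / A$i$i"
      unfolding t_def using assms(2) ar by (simp add: field_simps)
    finally have "qf (A - ?R) v = qf A (v + axis i t)" using 1 by (simp add: sf_diff_mat)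
    then show "Im (qf (A - ?R) v) = 0 \<and> 0 \<le> Re (qf (A - ?R) v)"
      using assms(1)[unfolded psd_iff] by simp
  qed
qed

lemma trace_psd: assumes "psd A" shows "Im (trace A) = 0" "Re (trace A) \<ge> 0"
  using psd_diag[OF assms] by (simp_all add: trace_def Im_sum Re_sum sum_nonneg)

lemma psd_trace0: assumes "psd A" "Re (trace A) = 0" shows "A = 0"
proof -
  have "\<forall>i\<in>UNIV. Re (A$i$i) = 0"
    using assms(2) psd_diag(2)[OF assms(1)] sum_nonneg_eq_0_iff[of UNIV "\<lambda>i. Re (A$i$i)"]
    by (simp add: trace_def Re_sum)
  then have d: "\<And>i. A$i$i = 0" using psd_diag(1)[OF assms(1)] by (simp add: complex_eq_iff)
  have "\<And>i j. A$i$j = 0" by (rule psd_diag_zero[OF assms(1) d])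
  then show ?thesis by (simp add: vec_eq_iff)
qed

lemma tr_psd: "psd A \<Longrightarrow> psd B \<Longrightarrow> Re (trace (A ** B)) \<ge> 0"
proof (induction "card {p. \<exists>q. B$p$q \<noteq> 0}" arbitrary: B rule: less_induct)
  case less
  show ?case
  proof (cases "\<exists>p q. B$p$q \<noteq> 0")
    case False
    then have "B = 0" by (simp add: vec_eq_iff)
    then show ?thesis by (simp add: trace_def)
  next
    case True
    then obtain i q where iq: "B$i$q \<noteq> 0" by blast
    then have bi: "B$i$i \<noteq> 0" using psd_diag_zero[OF less.prems(2)] by blast
    define R where "R = ((\<chi> p q. B$p$i * B$i$q / B$i$i)::complex^'a^'a)"
    define B' where "B' = B - R"
    have pB': "psd B'" unfolding B'_def R_def using schur[OF less.prems(2) bi] .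
    have sub: "{p. \<exists>q. B'$p$q \<noteq> 0} \<subseteq> {p. \<exists>q. B$p$q \<noteq> 0} - {i}"
    proof
      fix p assume "p \<in> {p. \<exists>q. B'$p$q \<noteq> 0}"
      then obtain q where q: "B'$p$q \<noteq> 0" by blast
      have e: "B'$p$q = B$p$q - B$p$i * B$i$q / B$i$i" by (simp add: B'_def R_def)
      have "p \<noteq> i" using q e bi by auto
      moreover have "\<exists>q. B$p$q \<noteq> 0" using q e by (metis diff_zero div_0 mult_zero_left)
      ultimately show "p \<in> {p. \<exists>q. B$p$q \<noteq> 0} - {i}" by simp
    qed
    have "card {p. \<exists>q. B'$p$q \<noteq> 0} < card {p. \<exists>q. B$p$q \<noteq> 0}"
      by (rule le_less_trans[OF card_mono[OF _ sub]]) (use iq in \<open>auto intro!: card_Diff1_less\<close>)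
    then have IH: "Re (trace (A ** B')) \<ge> 0" using less.hyps less.prems(1) pB' by blast
    have h: "herm B" using psd_herm[OF less.prems(2)] .
    have br: "B$i$i = of_real (Re (B$i$i))" using psd_diag(1)[OF less.prems(2), of i] by (simp add: complex_eq_iff)
    have bpos: "Re (B$i$i) > 0" using psd_diag(2)[OF less.prems(2), of i] bi br by (metis less_eq_real_def of_real_0)
    define u where "u = ((\<chi> p. B$p$i)::complex^'a)"
    have "trace (A ** R) = (\<Sum>p\<in>UNIV. \<Sum>q\<in>UNIV. A$p$q * (B$q$i * B$i$p / B$i$i))"
      unfolding trace_mult R_def by simp
    also have "\<dots> = qf A u / B$i$i"
      unfolding sf_def u_def using hermD[OF h]
      by (simp add: sum_divide_distrib mult.commute mult.left_commute)
    finally have tr: "trace (A ** R) = qf A u / of_real (Re (B$i$i))" using br by simp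
    have "Re (trace (A ** R)) \<ge> 0" unfolding tr
      using less.prems(1)[unfolded psd_iff] bpos by (simp add: Re_divide_of_real)
    moreover have "B = B' + R" unfolding B'_def by simp
    ultimately show ?thesis using IH by (simp add: matrix_add_ldistrib trace_add)
  qed
qed

lemma scR: "c *\<^sub>R (z::complex) = of_real c * z" by (rule scaleR_conv_of_real)
lemma scaleR_vec_entry: "(c *\<^sub>R (v::complex^'n))$i = of_real c * v$i"
  by (simp only: vector_scaleR_component scR)

lemma tr_add_l: "trace ((A + B) ** C) = trace (A ** C) + trace (B ** (C::complex^'n^'n))"
  by (simp add: trace_mult distrib_right sum.distrib)
lemma tr_add_r: "trace (C ** (A + B)) = trace (C ** A) + trace (C ** (B::complex^'n^'n))"
  by (simp add: trace_mult distrib_left sum.distrib)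
lemma tr_diff_l: "trace ((A - B) ** C) = trace (A ** C) - trace (B ** (C::complex^'n^'n))"
  by (simp add: trace_mult left_diff_distrib sum_subtractf)
lemma tr_diff_r: "trace (C ** (A - B)) = trace (C ** A) - trace (C ** (B::complex^'n^'n))"
  by (simp add: trace_mult right_diff_distrib sum_subtractf)
lemma tr_scale_l: "trace ((c *\<^sub>R A) ** C) = of_real c * trace (A ** (C::complex^'n^'n))"
  by (simp add: trace_mult scaleR_mat_entry sum_distrib_left mult.assoc scR)
lemma tr_scale_r: "trace (C ** (c *\<^sub>R A)) = of_real c * trace (C ** (A::complex^'n^'n))"
  by (simp add: trace_mult scaleR_mat_entry sum_distrib_left mult.left_commute scR)
lemma tr_comm: "trace ((A::complex^'n^'m) ** B) = trace (B ** A)"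
  by (rule trace_mul_sym)

lemma trace_add': "trace ((A::complex^'n^'n) + B) = trace A + trace B" by (rule trace_add)
lemma trace_scale: "trace (c *\<^sub>R (A::complex^'n^'n)) = of_real c * trace A"
  by (simp add: trace_def scaleR_mat_entry sum_distrib_left scR)

lemma qf_le_trace: assumes "psd B" shows "Re (qf B v) \<le> Re (trace B) * nv v"
proof -
  define C where "C = nv v *\<^sub>R mat 1 - proj v"
  have "psd C" unfolding psd_iff
  proof
    fix x
    have "qf C x = of_real (nv v * nv x - (cmod (\<Sum>i\<in>UNIV. cnj (x$i) * v$i))^2)"
      unfolding C_def sf_diff_mat sf_scale_mat qf_id qf_proj by simp
    then show "Im (qf C x) = 0 \<and> 0 \<le> Re (qf C x)" using CS[of x v] by (simp add: mult.commute)
  qed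
  then have "Re (trace (B ** C)) \<ge> 0" using tr_psd assms by blast
  moreover have "trace (B ** C) = of_real (nv v) * trace B - qf B v"
    unfolding C_def tr_diff_r tr_scale_r trace_proj by simp
  ultimately show ?thesis by (simp add: mult.commute)
qed

lemma Ef_iff: "A \<in> Ef \<longleftrightarrow> psd A \<and> psd (mat 1 - A)"
  by (simp add: Ef_def loewner_le_def)

lemma DM_iff: "B \<in> DM \<longleftrightarrow> psd B \<and> trace B = 1"
  by (simp add: DM_def)

lemma DM_Ef: assumes "B \<in> DM" shows "B \<in> Ef"
proof -
  have p: "psd B" "trace B = 1" using assms DM_iff by auto
  have "psd (mat 1 - B)" unfolding psd_iff
  proof
    fix v
    have "qf (mat 1 - B) v = of_real (nv v) - qf B v" by (simp add: sf_diff_mat qf_id)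
    then show "Im (qf (mat 1 - B) v) = 0 \<and> 0 \<le> Re (qf (mat 1 - B) v)"
      using herm_qf_real[OF psd_herm[OF p(1)]] qf_le_trace[OF p(1), of v] p(2) by simp
  qed
  then show ?thesis using p Ef_iff by blast
qed

lemma tr_psd_le: assumes "A \<in> Ef" "B \<in> DM" shows "0 \<le> Re (trace (A ** B))" "Re (trace (A ** B)) \<le> 1"
proof -
  have a: "psd A" "psd (mat 1 - A)" using assms(1) Ef_iff by auto
  have b: "psd B" "trace B = 1" using assms(2) DM_iff by auto
  show "0 \<le> Re (trace (A ** B))" using tr_psd[OF a(1) b(1)] .
  have "0 \<le> Re (trace ((mat 1 - A) ** B))" using tr_psd[OF a(2) b(1)] .
  then show "Re (trace (A ** B)) \<le> 1" using b(2) by (simp add: tr_diff_l)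
qed

lemma psd_qf0: assumes "\<And>v. qf A v = 0" shows "A = 0"
proof -
  have p: "psd A" unfolding psd_iff using assms by simp
  have "\<And>i. A$i$i = 0" using assms[of "axis i 1" for i] by (simp add: sf_axis)
  then have "\<And>i j. A$i$j = 0" using psd_diag_zero[OF p] by blast
  then show ?thesis by (simp add: vec_eq_iff)
qed

lemma nv_pos: "v \<noteq> 0 \<Longrightarrow> nv v > 0"
proof -
  assume "v \<noteq> 0"
  then obtain i where "v$i \<noteq> 0" by (auto simp: vec_eq_iff)
  then have "(cmod (v$i))^2 > 0" by simp
  moreover have "(cmod (v$i))^2 \<le> nv v" unfolding nv_def
    by (rule member_le_sum) auto
  ultimately show ?thesis by linarith
qed

lemma proj_scale: "proj (c *\<^sub>R v) = (c^2) *\<^sub>R proj v"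
  by (simp add: proj_def vec_eq_iff scaleR_vec_entry scaleR_mat_entry power2_eq_square)

lemma nv_scale: "nv (c *\<^sub>R v) = c^2 * nv v"
  by (simp add: nv_def sum_distrib_left power_mult_distrib scaleR_vec_entry norm_mult)

lemma unit_proj_DM: assumes "v \<noteq> 0" shows "(1 / nv v) *\<^sub>R proj v \<in> DM"
  unfolding DM_iff using nv_pos[OF assms]
  by (auto simp: psd_scale psd_proj trace_scale trace_proj1)

definition Gf :: "(complex^'n^'n \<Rightarrow> real) \<Rightarrow> complex^'n^'n \<Rightarrow> real" where
  "Gf f X = (if Re (trace X) = 0 then 0 else Re (trace X) * f ((1 / Re (trace X)) *\<^sub>R X))"

lemma trace_psd_real: "psd X \<Longrightarrow> trace X = of_real (Re (trace X))"
  using trace_psd(1) by (simp add: complex_eq_iff)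

lemma psd_norm_DM: assumes "psd X" "Re (trace X) > 0" shows "(1 / Re (trace X)) *\<^sub>R X \<in> DM"
  unfolding DM_iff using assms trace_psd_real[OF assms(1)]
  by (auto simp: psd_scale trace_scale)

lemma Gf_zero: "Gf f 0 = 0"
  by (simp add: Gf_def trace_def)

context
  fixes f :: "complex^'n^'n \<Rightarrow> real"
  assumes fC: "f \<in> ConvHom01 DM"
begin

lemma f_aff: "x \<in> DM \<Longrightarrow> y \<in> DM \<Longrightarrow> 0 \<le> r \<Longrightarrow> r \<le> 1 \<Longrightarrow>
   f (r *\<^sub>R x + (1 - r) *\<^sub>R y) = r * f x + (1 - r) * f y"
  using fC unfolding ConvHom01_def by blast

lemma f_range: "x \<in> DM \<Longrightarrow> 0 \<le> f x \<and> f x \<le> 1"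
  using fC unfolding ConvHom01_def by blast

lemma G_DM: "X \<in> DM \<Longrightarrow> Gf f X = f X"
  by (simp add: Gf_def DM_iff)

lemma G_range: assumes "psd X" shows "0 \<le> Gf f X \<and> Gf f X \<le> Re (trace X)"
proof -
  have t: "Re (trace X) \<ge> 0" using trace_psd(2)[OF assms] .
  show ?thesis
  proof (cases "Re (trace X) = 0")
    case True then show ?thesis by (simp add: Gf_def)
  next
    case False
    then have "Re (trace X) > 0" using t by simp
    then have "0 \<le> f ((1 / Re (trace X)) *\<^sub>R X) \<and> f ((1 / Re (trace X)) *\<^sub>R X) \<le> 1"
      using f_range psd_norm_DM assms by blast
    then show ?thesis using False t
      by (simp add: Gf_def mult_left_le)
  qed
qed

lemma G_add: assumes "psd X" "psd Y" shows "Gf f (X + Y) = Gf f X + Gf f Y"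
proof -
  define tX where "tX = Re (trace X)"
  define tY where "tY = Re (trace Y)"
  have tX: "tX \<ge> 0" using trace_psd(2)[OF assms(1)] tX_def by simp
  have tY: "tY \<ge> 0" using trace_psd(2)[OF assms(2)] tY_def by simp
  show ?thesis
  proof (cases "tX = 0")
    case True then have "X = 0" using psd_trace0[OF assms(1)] tX_def by simp
    then show ?thesis by (simp add: Gf_zero)
  next
    case fX: False
    show ?thesis
    proof (cases "tY = 0")
      case True then have "Y = 0" using psd_trace0[OF assms(2)] tY_def by simp
      then show ?thesis by (simp add: Gf_zero)
    next
      case fY: False
      have pX: "tX > 0" using fX tX by simp
      have pY: "tY > 0" using fY tY by simp
      define T where "T = tX + tY"
      have T: "T > 0" using pX pY T_def by simp
      have trs: "Re (trace (X + Y)) = T" unfolding T_def tX_def tY_def by (simp add: trace_add)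
      define r where "r = tX / T"
      have r: "0 \<le> r" "r \<le> 1" unfolding r_def T_def using pX pY by (simp_all add: divide_le_eq_1)
      have r1: "1 - r = tY / T" using T unfolding r_def T_def by (simp add: field_simps)
      have DX: "(1 / tX) *\<^sub>R X \<in> DM" using psd_norm_DM[OF assms(1)] pX tX_def by simp
      have DY: "(1 / tY) *\<^sub>R Y \<in> DM" using psd_norm_DM[OF assms(2)] pY tY_def by simp
      have eq: "(1 / T) *\<^sub>R (X + Y) = r *\<^sub>R ((1 / tX) *\<^sub>R X) + (1 - r) *\<^sub>R ((1 / tY) *\<^sub>R Y)"
        unfolding r1 unfolding r_def using pX pY by (simp add: scaleR_add_right)
      have "Gf f (X + Y) = T * f ((1 / T) *\<^sub>R (X + Y))"
        unfolding Gf_def trs using T by simp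
      also have "\<dots> = T * (r * f ((1 / tX) *\<^sub>R X) + (1 - r) * f ((1 / tY) *\<^sub>R Y))"
        unfolding eq using f_aff[OF DX DY r] by simp
      also have "\<dots> = tX * f ((1 / tX) *\<^sub>R X) + tY * f ((1 / tY) *\<^sub>R Y)"
        unfolding r1 unfolding r_def using T by (simp add: algebra_simps)
      also have "\<dots> = Gf f X + Gf f Y" unfolding Gf_def tX_def tY_def
        using fX fY tX_def tY_def by simp
      finally show ?thesis .
    qed
  qed
qed

lemma G_scale: assumes "0 \<le> c" "psd X" shows "Gf f (c *\<^sub>R X) = c * Gf f X"
proof (cases "c = 0")
  case True then show ?thesis by (simp add: Gf_zero)
next
  case False
  then have c: "c > 0" using assms by simp
  have tr: "Re (trace (c *\<^sub>R X)) = c * Re (trace X)" by (simp add: trace_scale)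
  show ?thesis
  proof (cases "Re (trace X) = 0")
    case True then show ?thesis unfolding Gf_def tr by simp
  next
    case False
    have "(1 / (c * Re (trace X))) *\<^sub>R (c *\<^sub>R X) = (1 / Re (trace X)) *\<^sub>R X"
      using c by simp
    then show ?thesis unfolding Gf_def tr using c False by simp
  qed
qed

lemma G_sum: "finite S \<Longrightarrow> (\<And>k. k \<in> S \<Longrightarrow> psd (F k)) \<Longrightarrow> Gf f (\<Sum>k\<in>S. F k) = (\<Sum>k\<in>S. Gf f (F k))"
proof (induction S rule: finite_induct)
  case empty then show ?case by (simp add: Gf_zero)
next
  case (insert a S)
  then show ?case by (simp add: G_add psd_sum)
qed

end

definition P1 :: "'n \<Rightarrow> 'n \<Rightarrow> complex^'n^'n" where
  "P1 i j = proj (axis i 1 + axis j 1)"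
definition P2 :: "'n \<Rightarrow> 'n \<Rightarrow> complex^'n^'n" where
  "P2 i j = proj (axis i 1 + axis j \<i>)"
definition DD :: "'n \<Rightarrow> 'n \<Rightarrow> complex^'n^'n" where
  "DD i j = proj (axis i 1) + proj (axis j 1)"

definition dl :: "'n \<Rightarrow> 'n \<Rightarrow> 'n \<Rightarrow> 'n \<Rightarrow> complex" where
  "dl i j p q = (if p = i \<and> q = j then 1 else 0)"

lemma P1D_entry: "(P1 i j - DD i j)$p$q = dl i j p q + dl j i p q"
  unfolding P1_def DD_def proj_def axis_def dl_def
  by (cases "p = i"; cases "q = j"; cases "p = j"; cases "q = i"; simp)

lemma DP2_entry: "(DD i j - P2 i j)$p$q = \<i> * (dl i j p q - dl j i p q)"
  by (auto simp: P2_def DD_def proj_def axis_def dl_def algebra_simps)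

lemma psd_P1: "psd (P1 i j)" by (simp add: P1_def psd_proj)
lemma psd_P2: "psd (P2 i j)" by (simp add: P2_def psd_proj)
lemma psd_DD: "psd (DD i j)" by (simp add: DD_def psd_proj psd_add)

lemma P1_sym: "P1 j i = P1 i j" by (simp add: P1_def add.commute)
lemma DD_sym: "DD j i = DD i j" by (simp add: DD_def add.commute)
lemma P2_sum: "P2 i j + P2 j i = 2 *\<^sub>R DD i j"
proof -
  have "\<And>p q. ((DD i j - P2 i j) + (DD j i - P2 j i))$p$q = 0"
    by (simp only: vector_add_component DP2_entry) (simp add: algebra_simps)
  then have "(DD i j - P2 i j) + (DD j i - P2 j i) = 0" by (simp add: vec_eq_iff)
  then show ?thesis using DD_sym[of i j] by (simp add: algebra_simps scaleR_2)
qed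

lemma delta_sum1: fixes c :: "'n::finite \<Rightarrow> 'n \<Rightarrow> complex" shows "(\<Sum>i\<in>UNIV. \<Sum>j\<in>UNIV. c i j * dl i j p q) = c p q"
proof -
  have "\<And>i. (\<Sum>j\<in>UNIV. c i j * dl i j p q) = (if i = p then c i q else 0)"
    by (auto simp: dl_def if_distrib sum.delta' cong: if_cong)
  then show ?thesis by simp
qed

lemma delta_sum2: fixes c :: "'n::finite \<Rightarrow> 'n \<Rightarrow> complex" shows "(\<Sum>i\<in>UNIV. \<Sum>j\<in>UNIV. c i j * dl j i p q) = c q p"
proof -
  have "\<And>i. (\<Sum>j\<in>UNIV. c i j * dl j i p q) = (if i = q then c i p else 0)"
    by (auto simp: dl_def if_distrib sum.delta' cong: if_cong)
  then show ?thesis by simp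
qed

lemma decomp:
  assumes "herm X"
  shows "(\<Sum>i\<in>UNIV. \<Sum>j\<in>UNIV. Re (X$i$j) *\<^sub>R (P1 i j - DD i j) + Im (X$i$j) *\<^sub>R (DD i j - P2 i j)) = 2 *\<^sub>R X"
proof -
  have "\<And>p q. (\<Sum>i\<in>UNIV. \<Sum>j\<in>UNIV. Re (X$i$j) *\<^sub>R (P1 i j - DD i j) + Im (X$i$j) *\<^sub>R (DD i j - P2 i j))$p$q = (2 *\<^sub>R X)$p$q"
  proof -
    fix p q
    have "(\<Sum>i\<in>UNIV. \<Sum>j\<in>UNIV. Re (X$i$j) *\<^sub>R (P1 i j - DD i j) + Im (X$i$j) *\<^sub>R (DD i j - P2 i j))$p$q
      = (\<Sum>i\<in>UNIV. \<Sum>j\<in>UNIV. (of_real (Re (X$i$j)) + \<i> * of_real (Im (X$i$j))) * dl i j p q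
           + (of_real (Re (X$i$j)) - \<i> * of_real (Im (X$i$j))) * dl j i p q)"
      unfolding sum_component vector_add_component scaleR_mat_entry P1D_entry DP2_entry
      by (intro sum.cong refl) (simp add: algebra_simps)
    also have "\<dots> = (of_real (Re (X$p$q)) + \<i> * of_real (Im (X$p$q))) + (of_real (Re (X$q$p)) - \<i> * of_real (Im (X$q$p)))"
      by (simp only: sum.distrib delta_sum1 delta_sum2)
    also have "\<dots> = X$p$q + cnj (X$q$p)"
      by (simp add: complex_eq_iff)
    also have "\<dots> = (2 *\<^sub>R X)$p$q" using hermD[OF assms, of q p] unfolding scaleR_mat_entry by simp
    finally show "?thesis p q" .
  qed
  then show ?thesis by (simp add: vec_eq_iff)
qed

definition alp :: "(complex^'n^'n \<Rightarrow> real) \<Rightarrow> 'n \<Rightarrow> 'n \<Rightarrow> real" where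
  "alp f i j = Gf f (P1 i j) - Gf f (DD i j)"
definition gam :: "(complex^'n^'n \<Rightarrow> real) \<Rightarrow> 'n \<Rightarrow> 'n \<Rightarrow> real" where
  "gam f i j = Gf f (DD i j) - Gf f (P2 i j)"
definition Amat :: "(complex^'n^'n \<Rightarrow> real) \<Rightarrow> complex^'n^'n" where
  "Amat f = (\<chi> i j. (of_real (alp f i j) + \<i> * of_real (gam f i j)) / 2)"

definition comb :: "real \<Rightarrow> real \<Rightarrow> real \<Rightarrow> real \<Rightarrow> 'n \<Rightarrow> 'n \<Rightarrow> complex^'n^'n" where
  "comb a b c d i j = a *\<^sub>R P1 i j + b *\<^sub>R DD i j + c *\<^sub>R DD i j + d *\<^sub>R P2 i j"

lemma pm_lemma: fixes P D :: "'a::real_vector"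
  shows "max (-a) 0 *\<^sub>R P + max a 0 *\<^sub>R D + a *\<^sub>R (P - D) = max a 0 *\<^sub>R P + max (-a) 0 *\<^sub>R D"
  by (cases "a \<ge> 0") (simp_all add: algebra_simps max_def)

lemma psd_comb: "0 \<le> a \<Longrightarrow> 0 \<le> b \<Longrightarrow> 0 \<le> c \<Longrightarrow> 0 \<le> d \<Longrightarrow> psd (comb a b c d i j)"
  unfolding comb_def by (intro psd_add psd_scale psd_P1 psd_P2 psd_DD)

lemma tr_repr: assumes "herm X"
  shows "2 * Re (trace (Amat f ** X)) = (\<Sum>i\<in>UNIV. \<Sum>j\<in>UNIV. Re (X$i$j) * alp f i j + Im (X$i$j) * gam f i j)"
proof -
  have "trace (Amat f ** X) = (\<Sum>i\<in>UNIV. \<Sum>j\<in>UNIV. (Amat f)$i$j * cnj (X$i$j))"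
    unfolding trace_mult using hermD[OF assms] by (simp add: herm_def)
  then have "2 * Re (trace (Amat f ** X)) = (\<Sum>i\<in>UNIV. \<Sum>j\<in>UNIV. 2 * Re ((Amat f)$i$j * cnj (X$i$j)))"
    by (simp add: Re_sum sum_distrib_left)
  also have "\<dots> = (\<Sum>i\<in>UNIV. \<Sum>j\<in>UNIV. Re (X$i$j) * alp f i j + Im (X$i$j) * gam f i j)"
    by (intro sum.cong refl) (simp add: Amat_def algebra_simps)
  finally show ?thesis .
qed

context
  fixes f :: "complex^'n^'n \<Rightarrow> real"
  assumes fC: "f \<in> ConvHom01 DM"
begin

lemma G_comb: "0 \<le> a \<Longrightarrow> 0 \<le> b \<Longrightarrow> 0 \<le> c \<Longrightarrow> 0 \<le> d \<Longrightarrow>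
  Gf f (comb a b c d i j) = a * Gf f (P1 i j) + b * Gf f (DD i j) + c * Gf f (DD i j) + d * Gf f (P2 i j)"
  unfolding comb_def
  by (simp add: G_add[OF fC] G_scale[OF fC] psd_add psd_scale psd_P1 psd_P2 psd_DD)

lemma G_repr: assumes "psd X"
  shows "2 * Gf f X = (\<Sum>i\<in>UNIV. \<Sum>j\<in>UNIV. Re (X$i$j) * alp f i j + Im (X$i$j) * gam f i j)"
proof -
  have hX: "herm X" using psd_herm[OF assms] .
  define x where "x i j = Re (X$i$j)" for i j
  define y where "y i j = Im (X$i$j)" for i j
  define Np where "Np i j = comb (max (- x i j) 0) (max (x i j) 0) (max (- y i j) 0) (max (y i j) 0) i j" for i j
  define Mp where "Mp i j = comb (max (x i j) 0) (max (- x i j) 0) (max (y i j) 0) (max (- y i j) 0) i j" for i j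
  define Tp where "Tp i j = x i j *\<^sub>R (P1 i j - DD i j) + y i j *\<^sub>R (DD i j - P2 i j)" for i j
  have eqp: "Np i j + Tp i j = Mp i j" for i j
  proof -
    have "Np i j + Tp i j = (max (- x i j) 0 *\<^sub>R P1 i j + max (x i j) 0 *\<^sub>R DD i j + x i j *\<^sub>R (P1 i j - DD i j))
       + (max (- y i j) 0 *\<^sub>R DD i j + max (y i j) 0 *\<^sub>R P2 i j + y i j *\<^sub>R (DD i j - P2 i j))"
      unfolding Np_def Tp_def comb_def by (simp add: algebra_simps)
    also have "\<dots> = Mp i j" unfolding pm_lemma Mp_def comb_def by (simp add: algebra_simps)
    finally show ?thesis .
  qed
  define N where "N = (\<Sum>i\<in>UNIV. \<Sum>j\<in>UNIV. Np i j)"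
  define M where "M = (\<Sum>i\<in>UNIV. \<Sum>j\<in>UNIV. Mp i j)"
  have T2: "(\<Sum>i\<in>UNIV. \<Sum>j\<in>UNIV. Tp i j) = 2 *\<^sub>R X"
    unfolding Tp_def x_def y_def by (rule decomp[OF hX])
  have NM: "N + 2 *\<^sub>R X = M"
    unfolding N_def M_def T2[symmetric] eqp[symmetric] by (simp add: sum.distrib)
  have pNp: "psd (Np i j)" "psd (Mp i j)" for i j unfolding Np_def Mp_def by (simp_all add: psd_comb)
  have pN: "psd N" unfolding N_def by (intro psd_sum pNp finite)
  have GN: "Gf f N = (\<Sum>i\<in>UNIV. \<Sum>j\<in>UNIV. Gf f (Np i j))"
    unfolding N_def by (simp add: G_sum[OF fC] psd_sum pNp)
  have GM: "Gf f M = (\<Sum>i\<in>UNIV. \<Sum>j\<in>UNIV. Gf f (Mp i j))"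
    unfolding M_def by (simp add: G_sum[OF fC] psd_sum pNp)
  have "Gf f M = Gf f N + 2 * Gf f X"
    unfolding NM[symmetric] using G_add[OF fC pN psd_scale[OF _ assms, of 2]] G_scale[OF fC _ assms, of 2] by simp
  then have "2 * Gf f X = (\<Sum>i\<in>UNIV. \<Sum>j\<in>UNIV. Gf f (Mp i j) - Gf f (Np i j))"
    unfolding GN GM by (simp add: sum_subtractf)
  also have "\<dots> = (\<Sum>i\<in>UNIV. \<Sum>j\<in>UNIV. x i j * alp f i j + y i j * gam f i j)"
  proof (intro sum.cong refl)
    fix i j
    have e1: "max (x i j) 0 - max (- x i j) 0 = x i j" "max (y i j) 0 - max (- y i j) 0 = y i j"
      by (simp_all add: max_def)
    show "Gf f (Mp i j) - Gf f (Np i j) = x i j * alp f i j + y i j * gam f i j"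
      unfolding Mp_def Np_def G_comb[OF max.cobounded2 max.cobounded2 max.cobounded2 max.cobounded2]
      unfolding alp_def gam_def using e1 by (simp add: algebra_simps)
  qed
  finally show ?thesis unfolding x_def y_def .
qed

lemma G_tr: "psd X \<Longrightarrow> Gf f X = Re (trace (Amat f ** X))"
  using G_repr[of X] tr_repr[OF psd_herm, of X f] by simp

lemma Amat_herm: "herm (Amat f)"
proof -
  have a: "alp f j i = alp f i j" for i j unfolding alp_def by (simp add: P1_sym DD_sym)
  have g: "gam f j i = - gam f i j" for i j
  proof -
    have "Gf f (P2 i j) + Gf f (P2 j i) = 2 * Gf f (DD i j)"
      using G_add[OF fC psd_P2 psd_P2, of i j j i] G_scale[OF fC _ psd_DD, of 2 i j] by (simp add: P2_sum)
    then show ?thesis unfolding gam_def using DD_sym[of i j] by simp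
  qed
  show ?thesis unfolding herm_def
  proof (intro allI)
    fix i j
    show "Amat f $ j $ i = cnj (Amat f $ i $ j)"
      unfolding Amat_def vec_lambda_beta a[of i j] g[of i j] by (simp add: complex_eq_iff)
  qed
qed

lemma Amat_Ef: "Amat f \<in> Ef"
proof -
  have h: "\<And>v. Im (qf (Amat f) v) = 0" using herm_qf_real[OF Amat_herm] .
  have r: "\<And>v. Re (qf (Amat f) v) = Gf f (proj v)"
    using G_tr[OF psd_proj] trace_proj by metis
  have "psd (Amat f)" unfolding psd_iff using h r G_range[OF fC psd_proj] by simp
  moreover have "psd (mat 1 - Amat f)" unfolding psd_iff
  proof
    fix v
    have "qf (mat 1 - Amat f) v = of_real (nv v) - qf (Amat f) v" by (simp add: sf_diff_mat qf_id)
    moreover have "Gf f (proj v) \<le> nv v" using G_range[OF fC psd_proj, of v] trace_proj1[of v] by simp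
    ultimately show "Im (qf (mat 1 - Amat f) v) = 0 \<and> 0 \<le> Re (qf (mat 1 - Amat f) v)"
      using h r by simp
  qed
  ultimately show ?thesis by (simp add: Ef_iff)
qed

lemma Amat_hs: "hs_Ef (Amat f) = f"
proof
  fix B
  show "hs_Ef (Amat f) B = f B"
  proof (cases "B \<in> DM")
    case True
    then show ?thesis unfolding hs_Ef_def using G_tr[of B] G_DM[OF fC True] by (simp add: DM_iff)
  next
    case False
    then show ?thesis using fC unfolding hs_Ef_def ConvHom01_def by (auto simp: extensional_def)
  qed
qed

end

lemma psd_id: "psd (mat 1 :: complex^'n^'n)"
  unfolding psd_iff qf_id by (simp add: nv_def sum_nonneg)

lemma sf_zero_vec: "qf A 0 = 0" by (simp add: sf_def)

lemma DM_convex: assumes "x \<in> DM" "y \<in> DM" "0 \<le> r" "r \<le> 1" shows "r *\<^sub>R x + (1 - r) *\<^sub>R y \<in> DM"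
proof -
  have "psd x" "psd y" "trace x = 1" "trace y = 1" using assms(1,2) DM_iff by auto
  moreover have "psd (r *\<^sub>R x + (1 - r) *\<^sub>R y)" using calculation assms by (intro psd_add psd_scale) auto
  moreover have "trace (r *\<^sub>R x + (1 - r) *\<^sub>R y) = 1" using calculation
    unfolding trace_add trace_scale by simp
  ultimately show ?thesis using DM_iff by blast
qed

lemma qf_unit: assumes "v \<noteq> 0"
  shows "Re (trace (A ** ((1 / nv v) *\<^sub>R proj v))) = Re (qf A v) / nv v"
  unfolding tr_scale_r trace_proj by simp

lemma herm_eq: assumes "herm A" "herm B" "\<And>v. v \<noteq> 0 \<Longrightarrow> Re (qf A v) = Re (qf B v)"
  shows "A = B"
proof -
  have "\<And>v. qf (A - B) v = 0"
  proof -
    fix v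
    show "qf (A - B) v = 0"
    proof (cases "v = 0")
      case True then show ?thesis by (simp add: sf_zero_vec)
    next
      case False
      then show ?thesis using assms(3)[OF False] herm_qf_real[OF assms(1), of v] herm_qf_real[OF assms(2), of v]
        by (simp add: sf_diff_mat complex_eq_iff)
    qed
  qed
  then have "A - B = 0" by (rule psd_qf0)
  then show ?thesis by simp
qed

lemma Ef_herm: "A \<in> Ef \<Longrightarrow> herm A" using psd_herm Ef_iff by blast
lemma DM_herm: "A \<in> DM \<Longrightarrow> herm A" using psd_herm DM_iff by blast

lemma mat1_Ef: "mat 1 \<in> Ef" unfolding Ef_iff by (simp add: psd_id psd_zero)

lemma Ef_scale: assumes "A \<in> Ef" "0 \<le> r" "r \<le> 1" shows "r *\<^sub>R A \<in> Ef"
proof -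
  have a: "psd A" "psd (mat 1 - A)" using assms(1) Ef_iff by auto
  have "mat 1 - r *\<^sub>R A = (1 - r) *\<^sub>R mat 1 + r *\<^sub>R (mat 1 - A)" by (simp add: algebra_simps)
  moreover have "psd ((1 - r) *\<^sub>R mat 1 + r *\<^sub>R (mat 1 - A))"
    using assms by (intro psd_add psd_scale a psd_id) auto
  ultimately show ?thesis unfolding Ef_iff using a assms by (simp add: psd_scale)
qed

lemma Ef_add: assumes "A \<in> Ef" "B \<in> Ef" "loewner_le (A + B) (mat 1)" shows "A + B \<in> Ef"
  using assms unfolding Ef_iff loewner_le_def by (simp add: psd_add)

lemma hs_Ef_in: fixes A :: "complex^'n^'n" assumes "A \<in> Ef" shows "hs_Ef A \<in> ConvHom01 DM"
  unfolding ConvHom01_def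
proof (intro CollectI conjI ballI allI impI)
  show "hs_Ef A \<in> extensional DM" unfolding hs_Ef_def by simp
next
  fix x :: "complex^'n^'n" assume "x \<in> DM"
  then show "0 \<le> hs_Ef A x" "hs_Ef A x \<le> 1" unfolding hs_Ef_def using tr_psd_le[OF assms] by auto
next
  fix x y :: "complex^'n^'n" and r :: real assume xy: "x \<in> DM" "y \<in> DM" and r: "0 \<le> r \<and> r \<le> 1"
  then have "r *\<^sub>R x + (1 - r) *\<^sub>R y \<in> DM" using DM_convex by auto
  then show "hs_Ef A (r *\<^sub>R x + (1 - r) *\<^sub>R y) = r * hs_Ef A x + (1 - r) * hs_Ef A y"
    unfolding hs_Ef_def using xy by (simp add: tr_add_r tr_scale_r)
qed

lemma hs_Ef_inj: "inj_on (hs_Ef :: complex^'n^'n \<Rightarrow> _) Ef"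
proof
  fix A B :: "complex^'n^'n" assume A: "A \<in> Ef" and B: "B \<in> Ef" and eq: "hs_Ef A = hs_Ef B"
  show "A = B"
  proof (rule herm_eq[OF Ef_herm[OF A] Ef_herm[OF B]])
    fix v :: "complex^'n" assume v: "v \<noteq> 0"
    have "hs_Ef A ((1 / nv v) *\<^sub>R proj v) = hs_Ef B ((1 / nv v) *\<^sub>R proj v)" using eq by simp
    then have "Re (qf A v) / nv v = Re (qf B v) / nv v"
      unfolding hs_Ef_def using unit_proj_DM[OF v] qf_unit[OF v] by simp
    then show "Re (qf A v) = Re (qf B v)" using nv_pos[OF v] by simp
  qed
qed

lemma hs_Ef_bij: "bij_betw (hs_Ef :: complex^'n^'n \<Rightarrow> _) Ef (ConvHom01 DM)"
  unfolding bij_betw_def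
proof
  show "inj_on (hs_Ef :: complex^'n^'n \<Rightarrow> _) Ef" by (rule hs_Ef_inj)
  show "(hs_Ef :: complex^'n^'n \<Rightarrow> _) ` Ef = ConvHom01 DM"
  proof
    show "(hs_Ef :: complex^'n^'n \<Rightarrow> _) ` Ef \<subseteq> ConvHom01 DM" using hs_Ef_in by blast
    show "ConvHom01 DM \<subseteq> (hs_Ef :: complex^'n^'n \<Rightarrow> _) ` Ef"
    proof
      fix f :: "complex^'n^'n \<Rightarrow> real" assume f: "f \<in> ConvHom01 DM"
      then show "f \<in> hs_Ef ` Ef" using Amat_Ef[OF f] Amat_hs[OF f] by (metis image_eqI)
    qed
  qed
qed

lemma hs_DM_in: fixes B :: "complex^'n^'n" assumes "B \<in> DM" shows "hs_DM B \<in> EModHom01"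
  unfolding EModHom01_def
proof (intro CollectI conjI ballI allI impI)
  show "hs_DM B \<in> extensional Ef" unfolding hs_DM_def by simp
next
  fix A :: "complex^'n^'n" assume "A \<in> Ef"
  then show "0 \<le> hs_DM B A" "hs_DM B A \<le> 1" unfolding hs_DM_def using tr_psd_le[OF _ assms] tr_comm[of B A] by auto
next
  show "hs_DM B (mat 1) = 1" unfolding hs_DM_def restrict_apply'[OF mat1_Ef] using assms by (simp add: DM_iff)
next
  fix A C :: "complex^'n^'n" assume A: "A \<in> Ef" and C: "C \<in> Ef" and le: "loewner_le (A + C) (mat 1)"
  then show "hs_DM B (A + C) = hs_DM B A + hs_DM B C"
    unfolding hs_DM_def using Ef_add[OF A C le] by (simp add: tr_add_r)
next
  fix r :: real and A :: "complex^'n^'n" assume A: "A \<in> Ef" and r: "0 \<le> r \<and> r \<le> 1"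
  then show "hs_DM B (r *\<^sub>R A) = r * hs_DM B A"
    unfolding hs_DM_def using Ef_scale[OF A] by (simp add: tr_scale_r)
qed

lemma hs_DM_inj: "inj_on (hs_DM :: complex^'n^'n \<Rightarrow> _) DM"
proof
  fix A B :: "complex^'n^'n" assume A: "A \<in> DM" and B: "B \<in> DM" and eq: "hs_DM A = hs_DM B"
  show "A = B"
  proof (rule herm_eq[OF DM_herm[OF A] DM_herm[OF B]])
    fix v :: "complex^'n" assume v: "v \<noteq> 0"
    have "hs_DM A ((1 / nv v) *\<^sub>R proj v) = hs_DM B ((1 / nv v) *\<^sub>R proj v)" using eq by simp
    then have "Re (qf A v) / nv v = Re (qf B v) / nv v"
      unfolding hs_DM_def using DM_Ef[OF unit_proj_DM[OF v]] qf_unit[OF v] by simp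
    then show "Re (qf A v) = Re (qf B v)" using nv_pos[OF v] by simp
  qed
qed

lemma EMod_surj: fixes g :: "complex^'n^'n \<Rightarrow> real" assumes g: "g \<in> EModHom01" shows "\<exists>B\<in>DM. hs_DM B = g"
proof -
  have gr: "\<And>A. A \<in> Ef \<Longrightarrow> 0 \<le> g A \<and> g A \<le> 1" using g unfolding EModHom01_def by blast
  have g1: "g (mat 1) = 1" using g unfolding EModHom01_def by blast
  have gadd: "\<And>A C. A \<in> Ef \<Longrightarrow> C \<in> Ef \<Longrightarrow> loewner_le (A + C) (mat 1) \<Longrightarrow> g (A + C) = g A + g C"
    using g unfolding EModHom01_def by blast
  have gsc: "\<And>r A. A \<in> Ef \<Longrightarrow> 0 \<le> r \<Longrightarrow> r \<le> 1 \<Longrightarrow> g (r *\<^sub>R A) = r * g A"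
    using g unfolding EModHom01_def by blast
  have gext: "g \<in> extensional Ef" using g unfolding EModHom01_def by blast
  define f where "f = restrict g DM"
  have fC: "f \<in> ConvHom01 DM" unfolding ConvHom01_def
  proof (intro CollectI conjI ballI allI impI)
    show "f \<in> extensional DM" unfolding f_def by simp
  next
    fix x :: "complex^'n^'n" assume "x \<in> DM" then show "0 \<le> f x" "f x \<le> 1" unfolding f_def using gr DM_Ef by auto
  next
    fix x y :: "complex^'n^'n" and r :: real assume xy: "x \<in> DM" "y \<in> DM" and r: "0 \<le> r \<and> r \<le> 1"
    have c: "r *\<^sub>R x + (1 - r) *\<^sub>R y \<in> DM" using DM_convex xy r by auto
    have e1: "r *\<^sub>R x \<in> Ef" "(1 - r) *\<^sub>R y \<in> Ef"
      using Ef_scale[OF DM_Ef[OF xy(1)], of r] Ef_scale[OF DM_Ef[OF xy(2)], of "1 - r"] r by auto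
    have "loewner_le (r *\<^sub>R x + (1 - r) *\<^sub>R y) (mat 1)" using DM_Ef[OF c] by (simp add: Ef_def)
    then have "g (r *\<^sub>R x + (1 - r) *\<^sub>R y) = r * g x + (1 - r) * g y"
      using gadd[OF e1] gsc[OF DM_Ef[OF xy(1)], of r] gsc[OF DM_Ef[OF xy(2)], of "1 - r"] r by simp
    then show "f (r *\<^sub>R x + (1 - r) *\<^sub>R y) = r * f x + (1 - r) * f y" unfolding f_def using c xy by simp
  qed
  define A where "A = Amat f"
  have AE: "A \<in> Ef" unfolding A_def by (rule Amat_Ef[OF fC])
  have Ahs: "hs_Ef A = f" unfolding A_def by (rule Amat_hs[OF fC])
  have g0: "g 0 = 0" using gsc[OF mat1_Ef, of 0] by simp
  have key: "g Y = Re (trace (A ** Y))" if Y: "Y \<in> Ef" for Y :: "complex^'n^'n"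
  proof -
    have pY: "psd Y" using Y Ef_iff by blast
    define t where "t = Re (trace Y)"
    have t0: "t \<ge> 0" using trace_psd(2)[OF pY] t_def by simp
    show ?thesis
    proof (cases "t = 0")
      case True
      then have "Y = 0" using psd_trace0[OF pY] t_def by simp
      then show ?thesis using g0 by (simp add: trace_def)
    next
      case False
      then have tp: "t > 0" using t0 by simp
      define D where "D = (1 / t) *\<^sub>R Y"
      have DD: "D \<in> DM" unfolding D_def t_def using psd_norm_DM[OF pY] tp t_def by simp
      have gD: "g D = Re (trace (A ** D))"
        using fun_cong[OF Ahs, of D] DD unfolding hs_Ef_def f_def by simp
      have YD: "Y = t *\<^sub>R D" unfolding D_def using tp by simp
      show ?thesis
      proof (cases "t \<le> 1")
        case True
        then have "g Y = t * g D" unfolding YD using gsc[OF DM_Ef[OF DD]] t0 by simp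
        then show ?thesis unfolding gD YD tr_scale_r by simp
      next
        case False
        have "g D = (1 / t) * g Y" unfolding D_def using gsc[OF Y, of "1 / t"] False by simp
        then have "g Y = t * g D" using tp by simp
        then show ?thesis unfolding gD by (simp add: YD tr_scale_r)
      qed
    qed
  qed
  have pA: "psd A" using AE Ef_iff by blast
  have "Re (trace A) = 1" using key[OF mat1_Ef] g1 by simp
  then have trA: "trace A = 1" using trace_psd(1)[OF pA] by (simp add: complex_eq_iff)
  have ADM: "A \<in> DM" using pA trA DM_iff by blast
  have "hs_DM A = g"
  proof
    fix Y :: "complex^'n^'n" show "hs_DM A Y = g Y"
      using key gext unfolding hs_DM_def by (cases "Y \<in> Ef") (auto simp: extensional_def)
  qed
  then show ?thesis using ADM by blast
qed

lemma hs_DM_bij: "bij_betw (hs_DM :: complex^'n^'n \<Rightarrow> _) DM EModHom01"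
  unfolding bij_betw_def
proof
  show "inj_on (hs_DM :: complex^'n^'n \<Rightarrow> _) DM" by (rule hs_DM_inj)
  show "(hs_DM :: complex^'n^'n \<Rightarrow> _) ` DM = EModHom01"
  proof
    show "(hs_DM :: complex^'n^'n \<Rightarrow> _) ` DM \<subseteq> EModHom01" using hs_DM_in by blast
    show "EModHom01 \<subseteq> (hs_DM :: complex^'n^'n \<Rightarrow> _) ` DM" using EMod_surj by blast
  qed
qed

definition dotc :: "complex^'n \<Rightarrow> complex^'n \<Rightarrow> complex" where
  "dotc x y = (\<Sum>i\<in>UNIV. cnj (x$i) * y$i)"

lemma qf_dotc: "qf M v = dotc v (M *v v)"
  by (simp add: sf_def dotc_def matrix_vector_mult_def sum_distrib_left mult.assoc)

lemma dotc_adj: fixes V :: "complex^'a^'b"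
  shows "dotc x (V *v y) = dotc (cadj V *v x) y"
proof -
  have "dotc x (V *v y) = (\<Sum>i\<in>UNIV. \<Sum>j\<in>UNIV. cnj (x$i) * V$i$j * y$j)"
    by (simp add: dotc_def matrix_vector_mult_def sum_distrib_left mult.assoc)
  also have "\<dots> = (\<Sum>j\<in>UNIV. \<Sum>i\<in>UNIV. cnj (x$i) * V$i$j * y$j)" by (rule sum.swap)
  also have "\<dots> = dotc (cadj V *v x) y"
    by (simp add: dotc_def matrix_vector_mult_def cadj_def sum_distrib_right sum_distrib_left mult.commute mult.left_commute)
  finally show ?thesis .
qed

lemma qf_conj: fixes V :: "complex^'a^'b"
  shows "qf (V ** X ** cadj V) v = qf X (cadj V *v v)"
proof -
  have "(V ** X ** cadj V) *v v = V *v (X *v (cadj V *v v))" by (metis matrix_vector_mul_assoc)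
  then show ?thesis unfolding qf_dotc by (simp add: dotc_adj)
qed

lemma psd_conj: fixes V :: "complex^'a^'b" shows "psd X \<Longrightarrow> psd (V ** X ** cadj V)"
  unfolding psd_iff qf_conj by blast

lemma cadj_cadj: "cadj (cadj U) = U"
  by (simp add: cadj_def vec_eq_iff)

lemma mat_diff_ldistrib: "(A::complex^'a^'b) ** (B - C) = A ** B - A ** C"
proof -
  have "A ** (B - C) + A ** C = A ** B" by (simp add: matrix_add_ldistrib[symmetric])
  then show ?thesis by (simp add: algebra_simps)
qed
lemma mat_add_rdistrib: "((B + C)::complex^'a^'b) ** A = B ** A + C ** A"
  by (simp add: matrix_matrix_mult_def vec_eq_iff distrib_right sum.distrib)

lemma mat_diff_rdistrib: "((B - C)::complex^'a^'b) ** A = B ** A - C ** A"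
proof -
  have "(B - C) ** A + C ** A = B ** A" by (simp add: mat_add_rdistrib[symmetric])
  then show ?thesis by (simp add: algebra_simps)
qed

lemma trace_conj: fixes U :: "complex^'n^'m" assumes "cadj U ** U = mat 1"
  shows "trace (U ** B ** cadj U) = trace B"
proof -
  have "trace (U ** B ** cadj U) = trace (cadj U ** (U ** B))" by (rule trace_mul_sym)
  also have "\<dots> = trace B" by (simp add: matrix_mul_assoc assms)
  finally show ?thesis .
qed

lemma DM_conj: fixes U :: "complex^'n^'m" assumes "cadj U ** U = mat 1" "B \<in> DM"
  shows "U ** B ** cadj U \<in> DM"
  using assms psd_conj trace_conj[OF assms(1)] by (auto simp: DM_iff)

lemma Ef_conj: fixes U :: "complex^'n^'m" assumes "U ** cadj U = mat 1" "A \<in> Ef"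
  shows "U ** A ** cadj U \<in> Ef"
proof -
  have "U ** (mat 1 - A) ** cadj U = mat 1 - U ** A ** cadj U"
    using assms(1) by (simp add: mat_diff_ldistrib mat_diff_rdistrib)
  then show ?thesis using assms(2) psd_conj[of _ U] unfolding Ef_iff by metis
qed

lemma trace_nat: fixes U :: "complex^'n^'m"
  shows "trace ((U ** B ** cadj U) ** A) = trace (B ** (cadj U ** A ** U))"
proof -
  have "trace ((U ** B ** cadj U) ** A) = trace ((U ** B) ** (cadj U ** A))" by (simp add: matrix_mul_assoc)
  also have "\<dots> = trace ((cadj U ** A) ** (U ** B))" by (rule trace_mul_sym)
  also have "\<dots> = trace ((cadj U ** A ** U) ** B)" by (simp add: matrix_mul_assoc)
  also have "\<dots> = trace (B ** (cadj U ** A ** U))" by (rule trace_mul_sym)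
  finally show ?thesis .
qed

lemma loew: fixes A B :: "complex^'n^'n" assumes A: "A \<in> Ef" and B: "B \<in> Ef"
  shows "loewner_le (A + B) (mat 1) \<longleftrightarrow> (\<forall>X\<in>DM. hs_Ef A X + hs_Ef B X \<le> 1)"
proof
  assume le: "loewner_le (A + B) (mat 1)"
  show "\<forall>X\<in>DM. hs_Ef A X + hs_Ef B X \<le> 1"
  proof
    fix X :: "complex^'n^'n" assume X: "X \<in> DM"
    have "0 \<le> Re (trace ((mat 1 - (A + B)) ** X))"
      using tr_psd le X unfolding loewner_le_def DM_iff by blast
    moreover have "trace X = 1" using X DM_iff by blast
    ultimately show "hs_Ef A X + hs_Ef B X \<le> 1" using X unfolding hs_Ef_def
      by (simp add: tr_diff_l tr_add_l)
  qed
next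
  assume H: "\<forall>X\<in>DM. hs_Ef A X + hs_Ef B X \<le> 1"
  have hA: "\<And>v. Im (qf A v) = 0" using herm_qf_real[OF Ef_herm[OF A]] .
  have hB: "\<And>v. Im (qf B v) = 0" using herm_qf_real[OF Ef_herm[OF B]] .
  show "loewner_le (A + B) (mat 1)" unfolding loewner_le_def psd_iff
  proof
    fix v :: "complex^'n"
    have q: "qf (mat 1 - (A + B)) v = of_real (nv v) - qf A v - qf B v"
      by (simp add: sf_diff_mat sf_add_mat qf_id)
    show "Im (qf (mat 1 - (A + B)) v) = 0 \<and> 0 \<le> Re (qf (mat 1 - (A + B)) v)"
    proof (cases "v = 0")
      case True then show ?thesis by (simp add: sf_zero_vec)
    next
      case False
      have "hs_Ef A ((1 / nv v) *\<^sub>R proj v) + hs_Ef B ((1 / nv v) *\<^sub>R proj v) \<le> 1"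
        using H unit_proj_DM[OF False] by blast
      then have "Re (qf A v) / nv v + Re (qf B v) / nv v \<le> 1"
        unfolding hs_Ef_def using unit_proj_DM[OF False] qf_unit[OF False] by simp
      then have "Re (qf A v) + Re (qf B v) \<le> nv v" using nv_pos[OF False]
        by (simp add: add_divide_distrib[symmetric] divide_le_eq)
      then show ?thesis unfolding q using hA hB by simp
    qed
  qed
qed

theorem theorem4p8:
  fixes U :: "complex^'n::finite^'m::finite"
  assumes "unitary_map U"
  shows
    \<comment> \<open>hs_Ef is an isomorphism of effect modules Ef(H) -> Conv(DM(H),[0,1])\<close>
    "bij_betw (hs_Ef :: complex^'n^'n \<Rightarrow> _) Ef (ConvHom01 DM)
     \<and> hs_Ef (mat 1 :: complex^'n^'n) = restrict (\<lambda>_. 1) DM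
     \<and> (\<forall>A\<in>(Ef :: (complex^'n^'n) set). \<forall>B\<in>Ef.
          loewner_le (A + B) (mat 1) \<longleftrightarrow> (\<forall>X\<in>DM. hs_Ef A X + hs_Ef B X \<le> 1))
     \<and> (\<forall>A\<in>(Ef :: (complex^'n^'n) set). \<forall>B\<in>Ef. loewner_le (A + B) (mat 1) \<longrightarrow>
          hs_Ef (A + B) = restrict (\<lambda>X. hs_Ef A X + hs_Ef B X) DM)
     \<and> (\<forall>r::real. \<forall>A\<in>(Ef :: (complex^'n^'n) set). 0 \<le> r \<and> r \<le> 1 \<longrightarrow>
          hs_Ef (r *\<^sub>R A) = restrict (\<lambda>X. r * hs_Ef A X) DM)
     \<comment> \<open>hs_DM is an isomorphism of convex sets DM(H) -> EMod(Ef(H),[0,1])\<close>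
     \<and> bij_betw (hs_DM :: complex^'n^'n \<Rightarrow> _) DM EModHom01
     \<and> (\<forall>B1\<in>(DM :: (complex^'n^'n) set). \<forall>B2\<in>DM. \<forall>r::real. 0 \<le> r \<and> r \<le> 1 \<longrightarrow>
          hs_DM (r *\<^sub>R B1 + (1 - r) *\<^sub>R B2) =
            restrict (\<lambda>A. r * hs_DM B1 A + (1 - r) * hs_DM B2 A) Ef)
     \<comment> \<open>the vertical functors are well defined on the unitary U : H -> K\<close>
     \<and> (\<forall>B\<in>(DM :: (complex^'n^'n) set). U ** B ** cadj U \<in> DM)
     \<and> (\<forall>A\<in>(Ef :: (complex^'n^'n) set). U ** A ** cadj U \<in> Ef)
     \<comment> \<open>naturality\<close>
     \<and> (\<forall>B\<in>(DM :: (complex^'n^'n) set).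
          hs_DM (U ** B ** cadj U) = restrict (\<lambda>A. hs_DM B (cadj U ** A ** U)) Ef)
     \<and> (\<forall>A\<in>(Ef :: (complex^'n^'n) set).
          hs_Ef (U ** A ** cadj U) = restrict (\<lambda>B. hs_Ef A (cadj U ** B ** U)) DM)
     \<comment> \<open>map of adjunctions: compatibility with unit and counit of Conv -| EMod^op\<close>
     \<and> (\<forall>B\<in>(DM :: (complex^'n^'n) set).
          restrict (\<lambda>f. f B) (ConvHom01 DM) =
          restrict (\<lambda>f. hs_DM B (the_inv_into Ef hs_Ef f)) (ConvHom01 DM))
     \<and> (\<forall>A\<in>(Ef :: (complex^'n^'n) set).
          restrict (\<lambda>g. g A) EModHom01 =
          restrict (\<lambda>g. hs_Ef A (the_inv_into DM hs_DM g)) EModHom01)"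
proof -
  have u1: "cadj U ** U = mat 1" and u2: "U ** cadj U = mat 1"
    using assms unfolding unitary_map_def by auto
  have u1': "cadj (cadj U) ** cadj U = mat 1" using u2 by (simp add: cadj_cadj)
  have u2': "cadj U ** cadj (cadj U) = mat 1" using u1 by (simp add: cadj_cadj)
  have c1: "bij_betw (hs_Ef :: complex^'n^'n \<Rightarrow> _) Ef (ConvHom01 DM)" by (rule hs_Ef_bij)
  have c2: "hs_Ef (mat 1 :: complex^'n^'n) = restrict (\<lambda>_. 1) DM"
    unfolding hs_Ef_def by (rule restrict_ext) (simp add: DM_iff)
  have c3: "\<forall>A\<in>(Ef :: (complex^'n^'n) set). \<forall>B\<in>Ef.
          loewner_le (A + B) (mat 1) \<longleftrightarrow> (\<forall>X\<in>DM. hs_Ef A X + hs_Ef B X \<le> 1)"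
    using loew by blast
  have c4: "\<forall>A\<in>(Ef :: (complex^'n^'n) set). \<forall>B\<in>Ef. loewner_le (A + B) (mat 1) \<longrightarrow>
          hs_Ef (A + B) = restrict (\<lambda>X. hs_Ef A X + hs_Ef B X) DM"
  proof (intro ballI impI)
    fix A B :: "complex^'n^'n"
    show "hs_Ef (A + B) = restrict (\<lambda>X. hs_Ef A X + hs_Ef B X) DM"
      unfolding hs_Ef_def by (rule restrict_ext) (simp add: tr_add_l)
  qed
  have c5: "\<forall>r::real. \<forall>A\<in>(Ef :: (complex^'n^'n) set). 0 \<le> r \<and> r \<le> 1 \<longrightarrow>
          hs_Ef (r *\<^sub>R A) = restrict (\<lambda>X. r * hs_Ef A X) DM"
  proof (intro allI ballI impI)
    fix r :: real and A :: "complex^'n^'n"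
    show "hs_Ef (r *\<^sub>R A) = restrict (\<lambda>X. r * hs_Ef A X) DM"
      unfolding hs_Ef_def by (rule restrict_ext) (simp add: tr_scale_l)
  qed
  have c6: "bij_betw (hs_DM :: complex^'n^'n \<Rightarrow> _) DM EModHom01" by (rule hs_DM_bij)
  have c7: "\<forall>B1\<in>(DM :: (complex^'n^'n) set). \<forall>B2\<in>DM. \<forall>r::real. 0 \<le> r \<and> r \<le> 1 \<longrightarrow>
          hs_DM (r *\<^sub>R B1 + (1 - r) *\<^sub>R B2) =
            restrict (\<lambda>A. r * hs_DM B1 A + (1 - r) * hs_DM B2 A) Ef"
  proof (intro allI ballI impI)
    fix r :: real and B1 B2 :: "complex^'n^'n"
    show "hs_DM (r *\<^sub>R B1 + (1 - r) *\<^sub>R B2) = restrict (\<lambda>A. r * hs_DM B1 A + (1 - r) * hs_DM B2 A) Ef"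
      unfolding hs_DM_def by (rule restrict_ext) (simp add: tr_add_l tr_scale_l)
  qed
  have c8: "\<forall>B\<in>(DM :: (complex^'n^'n) set). U ** B ** cadj U \<in> DM"
    using DM_conj[OF u1] by blast
  have c9: "\<forall>A\<in>(Ef :: (complex^'n^'n) set). U ** A ** cadj U \<in> Ef"
    using Ef_conj[OF u2] by blast
  have c10: "\<forall>B\<in>(DM :: (complex^'n^'n) set).
          hs_DM (U ** B ** cadj U) = restrict (\<lambda>A. hs_DM B (cadj U ** A ** U)) Ef"
  proof
    fix B :: "complex^'n^'n" assume B: "B \<in> DM"
    show "hs_DM (U ** B ** cadj U) = restrict (\<lambda>A. hs_DM B (cadj U ** A ** U)) Ef"
      unfolding hs_DM_def
    proof (rule restrict_ext)
      fix A :: "complex^'m^'m" assume A: "A \<in> Ef"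
      have "cadj U ** A ** U \<in> Ef" using Ef_conj[OF u2' A] by (simp add: cadj_cadj)
      then show "Re (trace (U ** B ** cadj U ** A)) = restrict (\<lambda>A. Re (trace (B ** A))) Ef (cadj U ** A ** U)"
        by (simp add: trace_nat)
    qed
  qed
  have c11: "\<forall>A\<in>(Ef :: (complex^'n^'n) set).
          hs_Ef (U ** A ** cadj U) = restrict (\<lambda>B. hs_Ef A (cadj U ** B ** U)) DM"
  proof
    fix A :: "complex^'n^'n" assume A: "A \<in> Ef"
    show "hs_Ef (U ** A ** cadj U) = restrict (\<lambda>B. hs_Ef A (cadj U ** B ** U)) DM"
      unfolding hs_Ef_def
    proof (rule restrict_ext)
      fix B :: "complex^'m^'m" assume B: "B \<in> DM"
      have "cadj U ** B ** U \<in> DM" using DM_conj[OF u1' B] by (simp add: cadj_cadj)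
      then show "Re (trace (U ** A ** cadj U ** B)) = restrict (\<lambda>B. Re (trace (A ** B))) DM (cadj U ** B ** U)"
        by (simp add: trace_nat)
    qed
  qed
  have c12: "\<forall>B\<in>(DM :: (complex^'n^'n) set).
          restrict (\<lambda>f. f B) (ConvHom01 DM) =
          restrict (\<lambda>f. hs_DM B (the_inv_into Ef hs_Ef f)) (ConvHom01 DM)"
  proof
    fix B :: "complex^'n^'n" assume B: "B \<in> DM"
    show "restrict (\<lambda>f. f B) (ConvHom01 DM) = restrict (\<lambda>f. hs_DM B (the_inv_into Ef hs_Ef f)) (ConvHom01 DM)"
    proof (rule restrict_ext)
      fix f :: "complex^'n^'n \<Rightarrow> real" assume f: "f \<in> ConvHom01 DM"
      define A where "A = the_inv_into Ef hs_Ef f"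
      have img: "f \<in> (hs_Ef :: complex^'n^'n \<Rightarrow> _) ` Ef" using f c1 unfolding bij_betw_def by simp
      have AE: "A \<in> Ef" unfolding A_def by (rule the_inv_into_into[OF hs_Ef_inj img subset_refl])
      have hA: "hs_Ef A = f" unfolding A_def by (rule f_the_inv_into_f[OF hs_Ef_inj img])
      have e1: "hs_Ef A B = Re (trace (A ** B))" using B by (simp add: hs_Ef_def)
      have e2: "hs_DM B A = Re (trace (B ** A))" using AE by (simp add: hs_DM_def)
      show "f B = hs_DM B (the_inv_into Ef hs_Ef f)"
        unfolding A_def[symmetric] using e1 e2 hA tr_comm[of A B] by simp
    qed
  qed
  have c13: "\<forall>A\<in>(Ef :: (complex^'n^'n) set).
          restrict (\<lambda>g. g A) EModHom01 =
          restrict (\<lambda>g. hs_Ef A (the_inv_into DM hs_DM g)) EModHom01"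
  proof
    fix A :: "complex^'n^'n" assume A: "A \<in> Ef"
    show "restrict (\<lambda>g. g A) EModHom01 = restrict (\<lambda>g. hs_Ef A (the_inv_into DM hs_DM g)) EModHom01"
    proof (rule restrict_ext)
      fix g :: "complex^'n^'n \<Rightarrow> real" assume g: "g \<in> EModHom01"
      define B where "B = the_inv_into DM hs_DM g"
      have img: "g \<in> (hs_DM :: complex^'n^'n \<Rightarrow> _) ` DM" using g c6 unfolding bij_betw_def by simp
      have BD: "B \<in> DM" unfolding B_def by (rule the_inv_into_into[OF hs_DM_inj img subset_refl])
      have hB: "hs_DM B = g" unfolding B_def by (rule f_the_inv_into_f[OF hs_DM_inj img])
      have e1: "hs_Ef A B = Re (trace (A ** B))" using BD by (simp add: hs_Ef_def)
      have e2: "hs_DM B A = Re (trace (B ** A))" using A by (simp add: hs_DM_def)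
      show "g A = hs_Ef A (the_inv_into DM hs_DM g)"
        unfolding B_def[symmetric] using e1 e2 hB tr_comm[of A B] by simp
    qed
  qed
  show ?thesis by (intro conjI c1 c2 c3 c4 c5 c6 c7 c8 c9 c10 c11 c12 c13)
qed

end
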